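(* For every $n \geq 2$ and $d \geq 3$, the locally compact group $H_{n,d} = \mathfrak{S}_n^{V_d,\mathfrak{S}_{n-1}} \rtimes K_d$ is strongly amenable.
   Context: $T_d$ is the $d$-regular tree with vertex set $V_d$; $v_0 \in V_d$ is fixed and $K_d$ is the stabilizer of $v_0$ in $\mathrm{Aut}(T_d)$ (a compact group). $\Sigma_n=\{0,\ldots,n-1\}$, $\mathfrak S_n=\mathrm{Sym}(\Sigma_n)$, $\mathfrak S_{n-1}$ the stabilizer of $0$; $\mathfrak{S}_n^{V_d,\mathfrak{S}_{n-1}}$ is the group of $(\sigma_v)_{v\in V_d}$ with $\sigma_v\in\mathfrak S_{n-1}$ for all but finitely many $v$, topologized so that the product group $\mathfrak{S}_{n-1}^{V_d}$ is a compact open subgroup; $K_d$ acts by $(\gamma\sigma)_v = \sigma_{\gamma^{-1}v}$ and $H_{n,d}$ has the topology making $\mathfrak{S}_{n-1}^{V_d}\rtimes K_d$ (product topology) open. A topological group $G$ is strongly amenable if every continuous proximal action of $G$ on a compact Hausdorff space $Y$ has a fixed point; an action is proximal if for all $y,y'\in Y$ the closure of the $G$-orbit of $(y,y')$ in $Y\times Y$ meets the diagonal. *)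

theory Defs
  imports "HOL-Analysis.Analysis" "HOL-Combinatorics.Permutations"
begin

definition graph_cycle :: "('v \<Rightarrow> 'v \<Rightarrow> bool) \<Rightarrow> 'v list \<Rightarrow> bool" where
  "graph_cycle E xs \<longleftrightarrow> length xs \<ge> 3 \<and> distinct xs \<and>
     (\<forall>i < length xs. E (xs ! i) (xs ! ((i + 1) mod length xs)))"

definition regular_tree :: "('v \<Rightarrow> 'v \<Rightarrow> bool) \<Rightarrow> nat \<Rightarrow> bool" where
  "regular_tree E d \<longleftrightarrow>
     (\<forall>x y. E x y \<longrightarrow> E y x) \<and> (\<forall>x. \<not> E x x) \<and>
     (\<forall>x y. E\<^sup>*\<^sup>* x y) \<and> (\<nexists>xs. graph_cycle E xs) \<and>
     (\<forall>x. finite {y. E x y} \<and> card {y. E x y} = d)"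

definition tree_aut :: "('v \<Rightarrow> 'v \<Rightarrow> bool) \<Rightarrow> ('v \<Rightarrow> 'v) set" where
  "tree_aut E = {g. bij g \<and> (\<forall>x y. E x y \<longleftrightarrow> E (g x) (g y))}"

definition stab_K :: "('v \<Rightarrow> 'v \<Rightarrow> bool) \<Rightarrow> 'v \<Rightarrow> ('v \<Rightarrow> 'v) set" where
  "stab_K E v0 = {g \<in> tree_aut E. g v0 = v0}"

text \<open>Permutations of Sigma_n = {0..<n}, as functions nat => nat fixing everything outside.
  The group S_n^{V, S_{n-1}} consists of families sigma with sigma v 0 = 0 for all but
  finitely many v.\<close>

definition Hgrp :: "nat \<Rightarrow> ('v \<Rightarrow> 'v \<Rightarrow> bool) \<Rightarrow> 'v \<Rightarrow> (('v \<Rightarrow> nat \<Rightarrow> nat) \<times> ('v \<Rightarrow> 'v)) set" where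
  "Hgrp n E v0 = {(\<sigma>, \<gamma>). (\<forall>v. \<sigma> v permutes {..<n}) \<and> finite {v. \<sigma> v 0 \<noteq> 0} \<and> \<gamma> \<in> stab_K E v0}"

text \<open>Semidirect product law: (sigma,gamma)(tau,delta) = (sigma * gamma.tau, gamma o delta),
  where (gamma.tau)_v = tau_{gamma^{-1} v} and the product in S_n^V is pointwise composition.\<close>

definition Hmult :: "(('v \<Rightarrow> nat \<Rightarrow> nat) \<times> ('v \<Rightarrow> 'v)) \<Rightarrow> (('v \<Rightarrow> nat \<Rightarrow> nat) \<times> ('v \<Rightarrow> 'v))
                     \<Rightarrow> (('v \<Rightarrow> nat \<Rightarrow> nat) \<times> ('v \<Rightarrow> 'v))" where
  "Hmult g h = (\<lambda>v. fst g v \<circ> fst h (inv (snd g) v), snd g \<circ> snd h)"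

definition Hone :: "('v \<Rightarrow> nat \<Rightarrow> nat) \<times> ('v \<Rightarrow> 'v)" where
  "Hone = (\<lambda>v. id, id)"

text \<open>The compact open subgroup U = S_{n-1}^V \<rtimes> K with the product topology:
  S_{n-1} discrete, K with the topology of pointwise convergence on V (each coordinate discrete).\<close>

definition Usub :: "nat \<Rightarrow> ('v \<Rightarrow> 'v \<Rightarrow> bool) \<Rightarrow> 'v \<Rightarrow> (('v \<Rightarrow> nat \<Rightarrow> nat) \<times> ('v \<Rightarrow> 'v)) set" where
  "Usub n E v0 = {(\<sigma>, \<gamma>). (\<forall>v. \<sigma> v permutes {..<n} \<and> \<sigma> v 0 = 0) \<and> \<gamma> \<in> stab_K E v0}"

definition Utop :: "nat \<Rightarrow> ('v \<Rightarrow> 'v \<Rightarrow> bool) \<Rightarrow> 'v \<Rightarrow> (('v \<Rightarrow> nat \<Rightarrow> nat) \<times> ('v \<Rightarrow> 'v)) topology" where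
  "Utop n E v0 =
     prod_topology
       (product_topology (\<lambda>v. discrete_topology {p. p permutes {..<n} \<and> p 0 = 0}) UNIV)
       (subtopology (product_topology (\<lambda>v. discrete_topology (UNIV :: 'v set)) UNIV) (stab_K E v0))"

text \<open>The topology on H: W is open iff every left translate g^{-1}W meets U in an open set of U
  (the group topology in which U, with its product topology, is an open subgroup).\<close>

definition Htop :: "nat \<Rightarrow> ('v \<Rightarrow> 'v \<Rightarrow> bool) \<Rightarrow> 'v \<Rightarrow> (('v \<Rightarrow> nat \<Rightarrow> nat) \<times> ('v \<Rightarrow> 'v)) topology" where
  "Htop n E v0 = topology (\<lambda>W. W \<subseteq> Hgrp n E v0 \<and>
      (\<forall>g \<in> Hgrp n E v0. openin (Utop n E v0) {u \<in> Usub n E v0. Hmult g u \<in> W}))"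

definition continuous_action ::
  "'g set \<Rightarrow> ('g \<Rightarrow> 'g \<Rightarrow> 'g) \<Rightarrow> 'g \<Rightarrow> 'g topology \<Rightarrow> 'y topology \<Rightarrow> ('g \<Rightarrow> 'y \<Rightarrow> 'y) \<Rightarrow> bool" where
  "continuous_action G m e TG TY a \<longleftrightarrow>
     continuous_map (prod_topology TG TY) TY (\<lambda>(g, y). a g y) \<and>
     (\<forall>y \<in> topspace TY. a e y = y) \<and>
     (\<forall>g \<in> G. \<forall>h \<in> G. \<forall>y \<in> topspace TY. a (m g h) y = a g (a h y))"

definition proximal_action :: "'g set \<Rightarrow> 'y topology \<Rightarrow> ('g \<Rightarrow> 'y \<Rightarrow> 'y) \<Rightarrow> bool" where
  "proximal_action G TY a \<longleftrightarrow>
     (\<forall>y \<in> topspace TY. \<forall>y' \<in> topspace TY.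
        (prod_topology TY TY) closure_of ((\<lambda>g. (a g y, a g y')) ` G) \<inter> {(z, z) | z. z \<in> topspace TY} \<noteq> {})"

text \<open>Strong amenability, with compact Hausdorff spaces ranging over (subsets of) the type 'y;
  a theorem with 'y a free type variable covers all compact Hausdorff spaces.\<close>

definition strongly_amenable ::
  "'y itself \<Rightarrow> 'g set \<Rightarrow> ('g \<Rightarrow> 'g \<Rightarrow> 'g) \<Rightarrow> 'g \<Rightarrow> 'g topology \<Rightarrow> bool" where
  "strongly_amenable _ G m e TG \<longleftrightarrow>
     (\<forall>(TY :: 'y topology) a.
        compact_space TY \<and> Hausdorff_space TY \<and> topspace TY \<noteq> {} \<and>
        continuous_action G m e TG TY a \<and> proximal_action G TY a
        \<longrightarrow> (\<exists>y \<in> topspace TY. \<forall>g \<in> G. a g y = y))"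

end

theory Submission
  imports Defs
begin


lemma act_cont_y:
  assumes "continuous_action G m e TG TY a" "s \<in> topspace TG"
  shows "continuous_map TY TY (a s)"
proof -
  have c: "continuous_map (prod_topology TG TY) TY (\<lambda>(g, y). a g y)"
    using assms(1) by (simp add: continuous_action_def)
  have "continuous_map TY (prod_topology TG TY) (\<lambda>y. (s, y))"
    using assms(2) by (intro continuous_map_pairedI continuous_map_id continuous_map_const[THEN iffD2]) auto
  from continuous_map_compose[OF this c] show ?thesis by (simp add: o_def)
qed

lemma act_cont_g:
  assumes "continuous_action G m e TG TY a" "y \<in> topspace TY"
  shows "continuous_map TG TY (\<lambda>g. a g y)"
proof -
  have c: "continuous_map (prod_topology TG TY) TY (\<lambda>(g, y). a g y)"
    using assms(1) by (simp add: continuous_action_def)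
  have "continuous_map TG (prod_topology TG TY) (\<lambda>g. (g, y))"
    using assms(2) by (intro continuous_map_pairedI continuous_map_id continuous_map_const[THEN iffD2]) auto
  from continuous_map_compose[OF this c] show ?thesis by (simp add: o_def)
qed

lemma act_in:
  assumes "continuous_action G m e TG TY a" "s \<in> topspace TG" "y \<in> topspace TY"
  shows "a s y \<in> topspace TY"
  using act_cont_y[OF assms(1,2)] assms(3) by (auto simp: continuous_map_def)

lemma fix_closed:
  assumes "continuous_action G m e TG TY a" "Hausdorff_space TY" "S \<subseteq> topspace TG"
  shows "closedin TY {y \<in> topspace TY. \<forall>s\<in>S. a s y = y}"
proof (cases "S = {}")
  case True then show ?thesis by simp
next
  case False
  have "{y \<in> topspace TY. \<forall>s\<in>S. a s y = y} = (\<Inter>s\<in>S. {y \<in> topspace TY. a s y = id y})"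
    using False by auto
  also have "closedin TY \<dots>"
  proof (rule closedin_Inter)
    show "\<And>T. T \<in> (\<lambda>s. {y \<in> topspace TY. a s y = id y}) ` S \<Longrightarrow> closedin TY T"
      using assms closedin_continuous_maps_eq[OF assms(2) act_cont_y[OF assms(1)] continuous_map_id] by auto
  qed (use False in auto)
  finally show ?thesis .
qed

lemma fix_finite_normal:
  fixes G :: "'g set" and TY :: "'y topology"
  assumes act: "continuous_action G m e TG TY a" and prox: "proximal_action G TY a"
   and H: "Hausdorff_space TY" and ne: "topspace TY \<noteq> {}"
   and fin: "finite M" and MG: "M \<subseteq> G" and GT: "G \<subseteq> topspace TG"
   and conj: "\<And>h. h \<in> G \<Longrightarrow> \<exists>c. inj_on c M \<and> c ` M \<subseteq> M \<and> (\<forall>x\<in>M. m h x = m (c x) h)"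
  shows "\<exists>y\<in>topspace TY. \<forall>x\<in>M. a x y = y"
proof -
  have law: "\<And>g h y. g \<in> G \<Longrightarrow> h \<in> G \<Longrightarrow> y \<in> topspace TY \<Longrightarrow> a (m g h) y = a g (a h y)"
    using act by (simp add: continuous_action_def)
  have inT: "\<And>g y. g \<in> G \<Longrightarrow> y \<in> topspace TY \<Longrightarrow> a g y \<in> topspace TY"
    using act_in[OF act] GT by auto
  let ?st = "\<lambda>y. {x\<in>M. a x y = y}"
  have fv: "finite ((\<lambda>y. card (?st y)) ` topspace TY)"
    by (rule finite_subset[of _ "{..card M}"]) (auto intro: card_mono fin)
  define k where "k = Max ((\<lambda>y. card (?st y)) ` topspace TY)"
  have "k \<in> (\<lambda>y. card (?st y)) ` topspace TY"
    unfolding k_def using fv ne by (intro Max_in) auto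
  then obtain y0 where y0: "y0 \<in> topspace TY" "card (?st y0) = k" by auto
  have kmax: "\<And>y. y \<in> topspace TY \<Longrightarrow> card (?st y) \<le> k"
    unfolding k_def using fv by (intro Max_ge) auto
  show ?thesis
  proof (rule bexI[of _ y0], rule ccontr)
    assume "\<not> (\<forall>x\<in>M. a x y0 = y0)"
    then obtain x0 where x0: "x0 \<in> M" "a x0 y0 \<noteq> y0" by auto
    define S where "S = ?st y0"
    define y1 where "y1 = a x0 y0"
    have y1: "y1 \<in> topspace TY" using x0 MG y0 inT unfolding y1_def by auto
    from prox y0 y1 obtain z where z: "(z,z) \<in> (prod_topology TY TY) closure_of ((\<lambda>g. (a g y0, a g y1)) ` G)" "z \<in> topspace TY"
      unfolding proximal_action_def by blast
    define P where "P = {(x', S'). x' \<in> M \<and> S' \<subseteq> M \<and> x' \<notin> S' \<and> card S' = card S}"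
    define C where "C = (\<lambda>(x',S'). {pq \<in> topspace TY \<times> topspace TY. snd pq = a x' (fst pq) \<and> (\<forall>s\<in>S'. a s (fst pq) = fst pq)})"
    have finP: "finite P"
      by (rule finite_subset[of _ "M \<times> Pow M"]) (auto simp: P_def fin)
    have clC: "closedin (prod_topology TY TY) (C xS)" if "xS \<in> P" for xS
    proof -
      obtain x' S' where xS: "xS = (x', S')" "x' \<in> M" "S' \<subseteq> M" using \<open>xS \<in> P\<close> unfolding P_def by auto
      have "C xS = {pq \<in> topspace (prod_topology TY TY). snd pq = (a x' \<circ> fst) pq}
              \<inter> {pq \<in> topspace (prod_topology TY TY). fst pq \<in> {y \<in> topspace TY. \<forall>s\<in>S'. a s y = y}}"
        unfolding C_def xS by auto
      also have "closedin (prod_topology TY TY) \<dots>"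
      proof (rule closedin_Int)
        show "closedin (prod_topology TY TY) {pq \<in> topspace (prod_topology TY TY). snd pq = (a x' \<circ> fst) pq}"
          using xS MG GT
          by (intro closedin_continuous_maps_eq[OF H] continuous_map_snd continuous_map_compose[OF continuous_map_fst] act_cont_y[OF act]) auto
        show "closedin (prod_topology TY TY) {pq \<in> topspace (prod_topology TY TY). fst pq \<in> {y \<in> topspace TY. \<forall>s\<in>S'. a s y = y}}"
          using xS MG GT
          by (intro closedin_continuous_map_preimage[OF continuous_map_fst] fix_closed[OF act H]) auto
      qed
      finally show ?thesis .
    qed
    have cl: "closedin (prod_topology TY TY) (\<Union>(C ` P))"
      using finP clC by (intro closedin_Union) auto
    have sub: "(\<lambda>g. (a g y0, a g y1)) ` G \<subseteq> \<Union>(C ` P)"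
    proof
      fix pq assume "pq \<in> (\<lambda>g. (a g y0, a g y1)) ` G"
      then obtain h where h: "h \<in> G" "pq = (a h y0, a h y1)" by auto
      obtain c where c: "inj_on c M" "c ` M \<subseteq> M" "\<And>x. x\<in>M \<Longrightarrow> m h x = m (c x) h"
        using conj[OF h(1)] by auto
      have SM: "S \<subseteq> M" unfolding S_def by auto
      have x0S: "x0 \<notin> S" using x0 unfolding S_def by auto
      have inP: "(c x0, c ` S) \<in> P"
      proof -
        have "c x0 \<notin> c ` S" using c(1) x0(1) SM x0S by (simp add: inj_on_image_mem_iff)
        moreover have "card (c ` S) = card S" using c(1) SM by (simp add: card_image inj_on_subset)
        moreover have "c ` S \<subseteq> M" using c(2) SM by blast
        ultimately show ?thesis using c(2) x0(1) unfolding P_def by auto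
      qed
      have "a h y1 = a (c x0) (a h y0)"
      proof -
        have cx: "c x0 \<in> G" "x0 \<in> G" using MG c(2) x0(1) by blast+
        have "a h y1 = a (m h x0) y0" unfolding y1_def using law[OF h(1) cx(2) y0(1)] by simp
        also have "\<dots> = a (m (c x0) h) y0" using c(3) x0 by simp
        also have "\<dots> = a (c x0) (a h y0)" using law[OF cx(1) h(1) y0(1)] .
        finally show ?thesis .
      qed
      moreover have "\<forall>s\<in>c ` S. a s (a h y0) = a h y0"
      proof
        fix s' assume "s' \<in> c ` S"
        then obtain s where s: "s \<in> S" "s' = c s" by auto
        have cs: "c s \<in> G" using MG c(2) s SM by blast
        have "a (c s) (a h y0) = a (m (c s) h) y0" using law[OF cs h(1) y0(1)] by simp
        also have "\<dots> = a (m h s) y0" using c(3) s SM by auto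
        also have "\<dots> = a h (a s y0)" using law h s SM MG y0 by auto
        also have "\<dots> = a h y0" using s unfolding S_def by auto
        finally show "a s' (a h y0) = a h y0" using s by simp
      qed
      ultimately have "pq \<in> C (c x0, c ` S)"
      proof -
        have "c x0 \<in> G" using MG c(2) x0(1) by blast
        then have "a (c x0) (a h y0) \<in> topspace TY" using inT h y0 by blast
        then show ?thesis unfolding C_def using h inT y0 \<open>a h y1 = _\<close> \<open>\<forall>s\<in>c ` S. _\<close> by auto
      qed
      then show "pq \<in> \<Union>(C ` P)" using inP by auto
    qed
    have "(z,z) \<in> \<Union>(C ` P)"
      using closure_of_minimal[OF sub cl] z(1) by auto
    then obtain x' S' where xS: "(x',S') \<in> P" "(z,z) \<in> C (x',S')" by auto
    have "insert x' S' \<subseteq> ?st z" using xS unfolding C_def P_def by auto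
    then have "card (insert x' S') \<le> card (?st z)" by (intro card_mono) (auto simp: fin)
    moreover have "card (insert x' S') = Suc (card S)"
    proof -
      have "finite S'" "x' \<notin> S'" "card S' = card S" using xS fin finite_subset unfolding P_def by auto
      then show ?thesis by simp
    qed
    moreover have "card S = k" using y0 unfolding S_def by simp
    ultimately show False using kmax[OF z(2)] by simp
  qed (use y0 in auto)
qed



fun tball :: "('v \<Rightarrow> 'v \<Rightarrow> bool) \<Rightarrow> 'v \<Rightarrow> nat \<Rightarrow> 'v set" where
  "tball E v0 0 = {v0}"
| "tball E v0 (Suc r) = tball E v0 r \<union> (\<Union>u\<in>tball E v0 r. {w. E u w})"

lemma tball_finite:
  assumes "\<And>x. finite {y. E x y}"
  shows "finite (tball E v0 r)"
  by (induction r) (auto simp: assms)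

lemma tball_mono: "r \<le> r' \<Longrightarrow> tball E v0 r \<subseteq> tball E v0 r'"
  by (induction r' rule: dec_induct) auto

lemma tball_cover:
  assumes "E\<^sup>*\<^sup>* v0 v" shows "\<exists>r. v \<in> tball E v0 r"
  using assms
proof (induction rule: rtranclp_induct)
  case base then show ?case by (metis insertI1 tball.simps(1))
next
  case (step y z)
  then obtain r where "y \<in> tball E v0 r" by auto
  then have "z \<in> tball E v0 (Suc r)" using step by auto
  then show ?case by blast
qed

lemma tball_finite_cover:
  assumes "finite D" "\<And>v. E\<^sup>*\<^sup>* v0 v" shows "\<exists>r. D \<subseteq> tball E v0 r"
  using assms(1)
proof (induction rule: finite_induct)
  case empty then show ?case by auto
next
  case (insert x F)
  then obtain r where r: "F \<subseteq> tball E v0 r" by auto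
  obtain r' where r': "x \<in> tball E v0 r'" using tball_cover[OF assms(2)[of x]] by (elim exE)
  have m1: "tball E v0 r \<subseteq> tball E v0 (max r r')" by (rule tball_mono) simp
  have m2: "tball E v0 r' \<subseteq> tball E v0 (max r r')" by (rule tball_mono) simp
  have "insert x F \<subseteq> tball E v0 (max r r')"
    using r r' m1 m2 by blast
  then show ?case by blast
qed

lemma tball_aut:
  assumes "\<gamma> \<in> stab_K E v0" shows "v \<in> tball E v0 r \<Longrightarrow> \<gamma> v \<in> tball E v0 r"
proof (induction r arbitrary: v)
  case 0 then show ?case using assms by (simp add: stab_K_def)
next
  case (Suc r)
  have E: "\<And>x y. E x y \<longleftrightarrow> E (\<gamma> x) (\<gamma> y)" using assms by (simp add: stab_K_def tree_aut_def)
  from Suc.prems show ?case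
  proof (cases "v \<in> tball E v0 r")
    case True then show ?thesis using Suc.IH by auto
  next
    case False
    then obtain u where "u \<in> tball E v0 r" "E u v" using Suc.prems by auto
    then have "\<gamma> u \<in> tball E v0 r" "E (\<gamma> u) (\<gamma> v)" using Suc.IH E[of u v] by auto
    then show ?thesis by auto
  qed
qed

lemma inv_stab_K:
  assumes "\<gamma> \<in> stab_K E v0" shows "inv \<gamma> \<in> stab_K E v0"
proof -
  have b: "bij \<gamma>" and E: "\<And>x y. E x y \<longleftrightarrow> E (\<gamma> x) (\<gamma> y)" and f: "\<gamma> v0 = v0"
    using assms by (auto simp: stab_K_def tree_aut_def)
  have "bij (inv \<gamma>)" using b by (simp add: bij_imp_bij_inv)
  moreover have "E x y \<longleftrightarrow> E (inv \<gamma> x) (inv \<gamma> y)" for x y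
  proof -
    have "\<gamma> (inv \<gamma> x) = x" "\<gamma> (inv \<gamma> y) = y" using b by (simp_all add: bij_is_surj surj_f_inv_f)
    then show ?thesis using E[of "inv \<gamma> x" "inv \<gamma> y"] by simp
  qed
  moreover have "inv \<gamma> v0 = v0" using f b by (metis bij_inv_eq_iff)
  ultimately show ?thesis by (simp add: stab_K_def tree_aut_def)
qed

lemma id_stab_K: "id \<in> stab_K E v0"
  by (simp add: stab_K_def tree_aut_def)

lemma comp_stab_K: "\<gamma> \<in> stab_K E v0 \<Longrightarrow> \<delta> \<in> stab_K E v0 \<Longrightarrow> \<gamma> \<circ> \<delta> \<in> stab_K E v0"
  by (auto simp: stab_K_def tree_aut_def bij_comp)



abbreviation T0 :: "('v \<Rightarrow> 'v) topology" where
  "T0 \<equiv> product_topology (\<lambda>v. discrete_topology (UNIV :: 'v set)) UNIV"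

lemma topspace_T0: "topspace T0 = UNIV"
  by (simp add: PiE_UNIV_domain)

lemma cyl_open:
  assumes "finite D" shows "openin T0 {f. \<forall>x\<in>D. f x = g x}"
  using assms
proof (induction rule: finite_induct)
  case empty
  have "openin T0 UNIV" using openin_topspace[of T0] unfolding topspace_T0 .
  then show ?case by simp
next
  case (insert a D)
  have "openin T0 {f \<in> topspace T0. f a \<in> {g a}}"
    by (rule openin_continuous_map_preimage[OF continuous_map_product_projection]) auto
  then have 1: "openin T0 {f. f a = g a}" unfolding topspace_T0 by simp
  have "{f. \<forall>x\<in>insert a D. f x = g x} = {f. f a = g a} \<inter> {f. \<forall>x\<in>D. f x = g x}" by auto
  then show ?case using openin_Int[OF 1 insert.IH] by simp
qed

definition rad :: "('v \<Rightarrow> 'v \<Rightarrow> bool) \<Rightarrow> 'v \<Rightarrow> 'v \<Rightarrow> nat" where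
  "rad E v0 w = (SOME r. w \<in> tball E v0 r)"

lemma rad: "(\<And>v. E\<^sup>*\<^sup>* v0 v) \<Longrightarrow> w \<in> tball E v0 (rad E v0 w)"
  unfolding rad_def using tball_cover by (metis someI_ex)

lemma stab_K_char:
  assumes conn: "\<And>v. E\<^sup>*\<^sup>* v0 v"
  shows "stab_K E v0 = {\<gamma>. (\<forall>x y. E x y \<longleftrightarrow> E (\<gamma> x) (\<gamma> y)) \<and> (\<forall>x y. \<gamma> x = \<gamma> y \<longrightarrow> x = y) \<and> \<gamma> v0 = v0
        \<and> (\<forall>w. \<exists>v\<in>tball E v0 (rad E v0 w). \<gamma> v = w)}" (is "_ = ?C")
proof
  show "stab_K E v0 \<subseteq> ?C"
  proof
    fix \<gamma> assume g: "\<gamma> \<in> stab_K E v0"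
    then have b: "bij \<gamma>" unfolding stab_K_def tree_aut_def by blast
    have "\<exists>v\<in>tball E v0 (rad E v0 w). \<gamma> v = w" for w
    proof
      show "inv \<gamma> w \<in> tball E v0 (rad E v0 w)"
        using tball_aut[OF inv_stab_K[OF g] rad[OF conn]] .
      show "\<gamma> (inv \<gamma> w) = w" using b by (simp add: bij_is_surj surj_f_inv_f)
    qed
    moreover have "\<forall>x y. E x y \<longleftrightarrow> E (\<gamma> x) (\<gamma> y)" "\<gamma> v0 = v0" using g unfolding stab_K_def tree_aut_def by blast+
    moreover have "\<forall>x y. \<gamma> x = \<gamma> y \<longrightarrow> x = y" using b by (meson bij_is_inj injD)
    ultimately show "\<gamma> \<in> ?C" by blast
  qed
next
  show "?C \<subseteq> stab_K E v0"
  proof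
    fix \<gamma> assume g: "\<gamma> \<in> ?C"
    then have "inj \<gamma>" unfolding inj_def by blast
    moreover have "\<forall>w. \<exists>v. w = \<gamma> v"
    proof
      fix w
      from g have "\<exists>v\<in>tball E v0 (rad E v0 w). \<gamma> v = w" by blast
      then show "\<exists>v. w = \<gamma> v" by (metis)
    qed
    then have "surj \<gamma>" unfolding surj_def .
    ultimately have "bij \<gamma>" by (simp add: bij_def)
    moreover have "\<forall>x y. E x y \<longleftrightarrow> E (\<gamma> x) (\<gamma> y)" "\<gamma> v0 = v0" using g by blast+
    ultimately show "\<gamma> \<in> stab_K E v0" unfolding stab_K_def tree_aut_def by blast
  qed
qed

lemma stab_K_closed:
  assumes conn: "\<And>v. E\<^sup>*\<^sup>* v0 v" and fin: "\<And>x. finite {y. E x y}"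
  shows "closedin T0 (stab_K E v0)"
  unfolding closedin_def topspace_T0
proof (intro conjI subset_UNIV, subst openin_subopen, intro ballI)
  fix \<gamma> assume "\<gamma> \<in> UNIV - stab_K E v0"
  then have ng: "\<gamma> \<notin> stab_K E v0" by simp
  have cyl: "\<exists>T. openin T0 T \<and> \<gamma> \<in> T \<and> T \<subseteq> UNIV - stab_K E v0"
    if D: "finite D" and bad: "\<And>f. (\<forall>x\<in>D. f x = \<gamma> x) \<Longrightarrow> f \<notin> stab_K E v0" for D
    using cyl_open[OF D, of \<gamma>] bad by (intro exI[of _ "{f. \<forall>x\<in>D. f x = \<gamma> x}"]) auto
  note ch = stab_K_char[OF conn]
  have ng': "\<not> ((\<forall>x y. E x y \<longleftrightarrow> E (\<gamma> x) (\<gamma> y)) \<and> (\<forall>x y. \<gamma> x = \<gamma> y \<longrightarrow> x = y) \<and> \<gamma> v0 = v0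
        \<and> (\<forall>w. \<exists>v\<in>tball E v0 (rad E v0 w). \<gamma> v = w))"
    using ng unfolding ch mem_Collect_eq .
  consider (e) x y where "\<not> (E x y \<longleftrightarrow> E (\<gamma> x) (\<gamma> y))"
    | (i) x y where "\<gamma> x = \<gamma> y" "x \<noteq> y" | (v) "\<gamma> v0 \<noteq> v0"
    | (s) w where "\<forall>v\<in>tball E v0 (rad E v0 w). \<gamma> v \<noteq> w"
    using ng' by blast
  then show "\<exists>T. openin T0 T \<and> \<gamma> \<in> T \<and> T \<subseteq> UNIV - stab_K E v0"
  proof cases
    case e show ?thesis
    proof (rule cyl[of "{x,y}"])
      fix f assume "\<forall>z\<in>{x,y}. f z = \<gamma> z"
      then have fx: "f x = \<gamma> x" "f y = \<gamma> y" by auto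
      show "f \<notin> stab_K E v0"
      proof
        assume "f \<in> stab_K E v0"
        then have "E x y \<longleftrightarrow> E (f x) (f y)" unfolding ch by blast
        then show False using e fx by simp
      qed
    qed simp
  next
    case i show ?thesis
    proof (rule cyl[of "{x,y}"])
      fix f assume "\<forall>z\<in>{x,y}. f z = \<gamma> z"
      then have fx: "f x = \<gamma> x" "f y = \<gamma> y" by auto
      show "f \<notin> stab_K E v0"
      proof
        assume "f \<in> stab_K E v0"
        then have "\<forall>x y. f x = f y \<longrightarrow> x = y" unfolding ch by blast
        then show False using i fx by metis
      qed
    qed simp
  next
    case v show ?thesis
    proof (rule cyl[of "{v0}"])
      fix f assume "\<forall>z\<in>{v0}. f z = \<gamma> z"
      then have fx: "f v0 = \<gamma> v0" by auto
      show "f \<notin> stab_K E v0"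
      proof
        assume "f \<in> stab_K E v0"
        then have "f v0 = v0" unfolding ch by blast
        then show False using v fx by simp
      qed
    qed simp
  next
    case s show ?thesis
    proof (rule cyl[of "tball E v0 (rad E v0 w)"])
      fix f assume fx: "\<forall>z\<in>tball E v0 (rad E v0 w). f z = \<gamma> z"
      show "f \<notin> stab_K E v0"
      proof
        assume "f \<in> stab_K E v0"
        then have "\<exists>v\<in>tball E v0 (rad E v0 w). f v = w" unfolding ch by blast
        then show False using s fx by metis
      qed
    qed (simp add: tball_finite fin)
  qed
qed

lemma stab_K_compact:
  assumes conn: "\<And>v. E\<^sup>*\<^sup>* v0 v" and fin: "\<And>x. finite {y. E x y}"
  shows "compactin T0 (stab_K E v0)"
proof (rule closed_compactin)
  show "compactin T0 (PiE UNIV (\<lambda>v. tball E v0 (rad E v0 v)))"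
    by (subst compactin_PiE) (auto simp: compactin_discrete_topology tball_finite fin)
  show "stab_K E v0 \<subseteq> PiE UNIV (\<lambda>v. tball E v0 (rad E v0 v))"
  proof
    fix \<gamma> assume g: "\<gamma> \<in> stab_K E v0"
    have "\<gamma> v \<in> tball E v0 (rad E v0 v)" for v by (rule tball_aut[OF g rad[OF conn]])
    then show "\<gamma> \<in> PiE UNIV (\<lambda>v. tball E v0 (rad E v0 v))" by (auto simp: PiE_def)
  qed
qed (rule stab_K_closed[OF conn fin])

lemma Utop_compact:
  assumes conn: "\<And>v. E\<^sup>*\<^sup>* v0 v" and fin: "\<And>x. finite {y. E x y}"
  shows "compact_space (Utop n E v0)"
  unfolding Utop_def
proof (subst compact_space_prod_topology, rule disjI2, rule conjI)
  have "finite {p. p permutes {..<n} \<and> p 0 = 0}"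
    by (rule finite_subset[OF _ finite_permutations[of "{..<n}"]]) auto
  then show "compact_space (product_topology (\<lambda>v. discrete_topology {p. p permutes {..<n} \<and> p 0 = 0}) (UNIV :: 'v set))"
    by (simp add: compact_space_product_topology compact_space_discrete_topology)
  show "compact_space (subtopology T0 (stab_K E v0))"
    by (rule compact_space_subtopology[OF stab_K_compact[OF conn fin]])
qed



definition Mset :: "nat \<Rightarrow> ('v \<Rightarrow> 'v \<Rightarrow> bool) \<Rightarrow> 'v \<Rightarrow> nat \<Rightarrow> (('v \<Rightarrow> nat \<Rightarrow> nat) \<times> ('v \<Rightarrow> 'v)) set" where
  "Mset n E v0 r = {(\<sigma>, id) | \<sigma>. (\<forall>v. \<sigma> v permutes {..<n}) \<and> (\<forall>v. v \<notin> tball E v0 r \<longrightarrow> \<sigma> v = id)}"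

definition cj :: "(('v \<Rightarrow> nat \<Rightarrow> nat) \<times> ('v \<Rightarrow> 'v)) \<Rightarrow> (('v \<Rightarrow> nat \<Rightarrow> nat) \<times> ('v \<Rightarrow> 'v)) \<Rightarrow> (('v \<Rightarrow> nat \<Rightarrow> nat) \<times> ('v \<Rightarrow> 'v))" where
  "cj h m = (\<lambda>v. fst h v \<circ> fst m (inv (snd h) v) \<circ> inv (fst h v), id)"

lemma Hmult_simp: "Hmult (\<sigma>, \<gamma>) (\<tau>, \<delta>) = (\<lambda>v. \<sigma> v \<circ> \<tau> (inv \<gamma> v), \<gamma> \<circ> \<delta>)"
  by (simp add: Hmult_def)

lemma Usub_Hgrp: "Usub n E v0 \<subseteq> Hgrp n E v0"
  by (auto simp: Usub_def Hgrp_def)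

lemma Hone_Hgrp: "Hone \<in> Hgrp n E v0"
  by (simp add: Hone_def Hgrp_def permutes_id id_stab_K)

lemma Hmult_Hone: "Hmult Hone u = u"
  by (cases u) (simp add: Hone_def Hmult_def)

lemma Hmult_HU:
  assumes "g \<in> Hgrp n E v0" "u \<in> Usub n E v0" shows "Hmult g u \<in> Hgrp n E v0"
proof -
  obtain \<sigma> \<gamma> \<tau> \<delta> where g: "g = (\<sigma>, \<gamma>)" and u: "u = (\<tau>, \<delta>)" by (cases g, cases u) auto
  have s: "\<And>v. \<sigma> v permutes {..<n}" "finite {v. \<sigma> v 0 \<noteq> 0}" "\<gamma> \<in> stab_K E v0"
    using assms(1) unfolding g Hgrp_def by auto
  have t: "\<And>v. \<tau> v permutes {..<n}" "\<And>v. \<tau> v 0 = 0" "\<delta> \<in> stab_K E v0"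
    using assms(2) unfolding u Usub_def by auto
  have "{v. (\<sigma> v \<circ> \<tau> (inv \<gamma> v)) 0 \<noteq> 0} = {v. \<sigma> v 0 \<noteq> 0}" using t(2) by simp
  then show ?thesis using s t unfolding g u Hmult_simp Hgrp_def
    by (auto intro: permutes_compose comp_stab_K)
qed

lemma istop_H: "istopology (\<lambda>W. W \<subseteq> Hgrp n E v0 \<and>
      (\<forall>g \<in> Hgrp n E v0. openin (Utop n E v0) {u \<in> Usub n E v0. Hmult g u \<in> W}))"
  (is "istopology ?P")
proof -
  have 1: "?P (S \<inter> T)" if S: "?P S" and T: "?P T" for S T
  proof -
    have "{u \<in> Usub n E v0. Hmult g u \<in> S \<inter> T} = {u \<in> Usub n E v0. Hmult g u \<in> S} \<inter> {u \<in> Usub n E v0. Hmult g u \<in> T}" for g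
      by auto
    then show ?thesis using S T by (auto intro: openin_Int)
  qed
  have 2: "?P (\<Union>K)" if K: "\<forall>S\<in>K. ?P S" for K
  proof -
    have "{u \<in> Usub n E v0. Hmult g u \<in> \<Union>K} = \<Union>((\<lambda>S. {u \<in> Usub n E v0. Hmult g u \<in> S}) ` K)" for g
      by auto
    then show ?thesis using K by (auto intro!: openin_Union)
  qed
  show ?thesis unfolding istopology_def using 1 2 by blast
qed

lemma openin_Htop: "openin (Htop n E v0) W \<longleftrightarrow> W \<subseteq> Hgrp n E v0 \<and>
      (\<forall>g \<in> Hgrp n E v0. openin (Utop n E v0) {u \<in> Usub n E v0. Hmult g u \<in> W})"
  unfolding Htop_def by (simp only: topology_inverse'[OF istop_H])

lemma topspace_Utop: "topspace (Utop n E v0) = Usub n E v0"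
  by (auto simp: Utop_def Usub_def PiE_UNIV_domain)

lemma topspace_Htop: "topspace (Htop n E v0) = Hgrp n E v0"
proof
  show "topspace (Htop n E v0) \<subseteq> Hgrp n E v0"
    unfolding topspace_def openin_Htop by auto
  have "openin (Htop n E v0) (Hgrp n E v0)"
    unfolding openin_Htop
  proof (intro conjI ballI subset_refl)
    fix g assume g: "g \<in> Hgrp n E v0"
    have "{u \<in> Usub n E v0. Hmult g u \<in> Hgrp n E v0} = topspace (Utop n E v0)"
      using Hmult_HU[OF g] topspace_Utop[of n E v0] by auto
    then show "openin (Utop n E v0) {u \<in> Usub n E v0. Hmult g u \<in> Hgrp n E v0}" by simp
  qed
  then show "Hgrp n E v0 \<subseteq> topspace (Htop n E v0)" by (rule openin_subset)
qed

lemma Usub_compact: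
  assumes conn: "\<And>v. E\<^sup>*\<^sup>* v0 v" and fin: "\<And>x. finite {y. E x y}"
  shows "compactin (Htop n E v0) (Usub n E v0)"
proof -
  have "continuous_map (Utop n E v0) (Htop n E v0) id"
    unfolding continuous_map_def
  proof (intro conjI allI impI)
    show "id \<in> topspace (Utop n E v0) \<rightarrow> topspace (Htop n E v0)"
      using Usub_Hgrp[of n E v0] topspace_Utop[of n E v0] topspace_Htop[of n E v0] by auto
    fix W assume "openin (Htop n E v0) W"
    then have "\<forall>g\<in>Hgrp n E v0. openin (Utop n E v0) {u \<in> Usub n E v0. Hmult g u \<in> W}"
      unfolding openin_Htop by (rule conjunct2)
    from bspec[OF this Hone_Hgrp] have "openin (Utop n E v0) {u \<in> Usub n E v0. Hmult Hone u \<in> W}" .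
    then show "openin (Utop n E v0) {x \<in> topspace (Utop n E v0). id x \<in> W}"
      unfolding Hmult_Hone topspace_Utop id_apply .
  qed
  moreover have "compactin (Utop n E v0) (topspace (Utop n E v0))"
    using Utop_compact[OF conn fin] unfolding compact_space_def .
  ultimately have "compactin (Htop n E v0) (id ` topspace (Utop n E v0))"
    using image_compactin by blast
  then show ?thesis by (simp add: topspace_Utop)
qed



lemma Mset_mem: "m \<in> Mset n E v0 r \<longleftrightarrow> snd m = id \<and> (\<forall>v. fst m v permutes {..<n}) \<and> (\<forall>v. v \<notin> tball E v0 r \<longrightarrow> fst m v = id)"
  by (cases m) (auto simp: Mset_def)

lemma Mset_Hgrp:
  assumes fin: "\<And>x. finite {y. E x y}"
  shows "Mset n E v0 r \<subseteq> Hgrp n E v0"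
proof
  fix m assume m: "m \<in> Mset n E v0 r"
  obtain \<sigma> where s: "m = (\<sigma>, id)" "\<And>v. \<sigma> v permutes {..<n}" "\<And>v. v \<notin> tball E v0 r \<Longrightarrow> \<sigma> v = id"
    using m unfolding Mset_def by blast
  have "{v. \<sigma> v 0 \<noteq> 0} \<subseteq> tball E v0 r"
  proof
    fix v assume "v \<in> {v. \<sigma> v 0 \<noteq> 0}"
    then have "\<sigma> v \<noteq> id" by auto
    then show "v \<in> tball E v0 r" using s(3) by blast
  qed
  then have "finite {v. \<sigma> v 0 \<noteq> 0}" using tball_finite[OF fin] by (rule finite_subset)
  then show "m \<in> Hgrp n E v0" unfolding s(1) Hgrp_def mem_Collect_eq prod.case using s(2) id_stab_K[of E v0] by blast
qed

lemma Mset_finite: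
  assumes fin: "\<And>x. finite {y. E x y}"
  shows "finite (Mset n E v0 r)"
proof -
  let ?B = "tball E v0 r"
  have "Mset n E v0 r \<subseteq> (\<lambda>f. (\<lambda>v. if v \<in> ?B then f v else id, id)) ` (PiE ?B (\<lambda>_. {p. p permutes {..<n}}))"
  proof
    fix m assume m: "m \<in> Mset n E v0 r"
    obtain \<sigma> where s: "m = (\<sigma>, id)" "\<And>v. \<sigma> v permutes {..<n}" "\<And>v. v \<notin> ?B \<Longrightarrow> \<sigma> v = id"
      using m unfolding Mset_def by blast
    have "(\<lambda>v. if v \<in> ?B then restrict \<sigma> ?B v else id) = \<sigma>"
    proof
      fix v show "(if v \<in> ?B then restrict \<sigma> ?B v else id) = \<sigma> v"
        using s(3)[of v] by (cases "v \<in> ?B") simp_all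
    qed
    then have "m = (\<lambda>f. (\<lambda>v. if v \<in> ?B then f v else id, id)) (restrict \<sigma> ?B)" using s(1) by simp
    moreover have "restrict \<sigma> ?B \<in> PiE ?B (\<lambda>_. {p. p permutes {..<n}})" using s(2) by simp
    ultimately show "m \<in> (\<lambda>f. (\<lambda>v. if v \<in> ?B then f v else id, id)) ` (PiE ?B (\<lambda>_. {p. p permutes {..<n}}))"
      by (rule image_eqI)
  qed
  moreover have "finite (PiE ?B (\<lambda>_. {p. p permutes {..<n}}))"
    by (intro finite_PiE tball_finite fin finite_permutations) auto
  ultimately show ?thesis using finite_subset by blast
qed

lemma Mset_mono: "r \<le> r' \<Longrightarrow> Mset n E v0 r \<subseteq> Mset n E v0 r'"
  using tball_mono[of r r' E v0] unfolding Mset_def by blast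

lemma cj_eq:
  assumes h: "h \<in> Hgrp n E v0" and m: "m \<in> Mset n E v0 r"
  shows "Hmult h m = Hmult (cj h m) h"
proof -
  obtain \<sigma> \<gamma> where hh: "h = (\<sigma>, \<gamma>)" by (cases h)
  obtain \<tau> where mm: "m = (\<tau>, id)" using m unfolding Mset_def by blast
  have s: "\<And>v. \<sigma> v permutes {..<n}" using h unfolding hh Hgrp_def by auto
  have "(\<sigma> v \<circ> \<tau> (inv \<gamma> v) \<circ> inv (\<sigma> v)) \<circ> \<sigma> v = \<sigma> v \<circ> \<tau> (inv \<gamma> v)" for v
    using permutes_inv_o(2)[OF s[of v]] by (simp add: o_assoc[symmetric])
  then show ?thesis unfolding hh mm cj_def Hmult_simp by (simp add: fun_eq_iff)
qed

lemma cj_in: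
  assumes h: "h \<in> Hgrp n E v0" and m: "m \<in> Mset n E v0 r"
  shows "cj h m \<in> Mset n E v0 r"
proof -
  obtain \<sigma> \<gamma> where hh: "h = (\<sigma>, \<gamma>)" by (cases h)
  obtain \<tau> where mm: "m = (\<tau>, id)" and t: "\<And>v. \<tau> v permutes {..<n}" "\<And>v. v \<notin> tball E v0 r \<Longrightarrow> \<tau> v = id"
    using m unfolding Mset_def by blast
  have s: "\<And>v. \<sigma> v permutes {..<n}" and g: "\<gamma> \<in> stab_K E v0" using h unfolding hh Hgrp_def by auto
  have bg: "bij \<gamma>" using g unfolding stab_K_def tree_aut_def by blast
  have p: "\<sigma> v \<circ> \<tau> (inv \<gamma> v) \<circ> inv (\<sigma> v) permutes {..<n}" for v
    by (intro permutes_compose permutes_inv s t)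
  have "\<sigma> v \<circ> \<tau> (inv \<gamma> v) \<circ> inv (\<sigma> v) = id" if v: "v \<notin> tball E v0 r" for v
  proof -
    have "inv \<gamma> v \<notin> tball E v0 r"
    proof
      assume "inv \<gamma> v \<in> tball E v0 r"
      from tball_aut[OF g this] have "\<gamma> (inv \<gamma> v) \<in> tball E v0 r" .
      then show False using v bg by (simp add: bij_is_surj surj_f_inv_f)
    qed
    then show ?thesis using t(2) permutes_inv_o(1)[OF s[of v]] by simp
  qed
  then show ?thesis using p unfolding Mset_def cj_def hh mm by auto
qed

lemma cj_inj:
  assumes h: "h \<in> Hgrp n E v0"
  shows "inj_on (cj h) (Mset n E v0 r)"
proof
  fix m1 m2 assume m1: "m1 \<in> Mset n E v0 r" and m2: "m2 \<in> Mset n E v0 r" and eq: "cj h m1 = cj h m2"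
  obtain \<sigma> \<gamma> where hh: "h = (\<sigma>, \<gamma>)" by (cases h)
  obtain \<tau>1 where mm1: "m1 = (\<tau>1, id)" using m1 unfolding Mset_def by blast
  obtain \<tau>2 where mm2: "m2 = (\<tau>2, id)" using m2 unfolding Mset_def by blast
  have s: "\<And>v. \<sigma> v permutes {..<n}" and g: "\<gamma> \<in> stab_K E v0" using h unfolding hh Hgrp_def by auto
  have bg: "bij \<gamma>" using g unfolding stab_K_def tree_aut_def by blast
  have "\<tau>1 w = \<tau>2 w" for w
  proof -
    let ?v = "\<gamma> w"
    have iv: "inv \<gamma> ?v = w" using bg by (simp add: bij_is_inj inv_f_f)
    have "fst (cj h m1) ?v = fst (cj h m2) ?v" using eq by simp
    then have "\<sigma> ?v \<circ> \<tau>1 (inv \<gamma> ?v) \<circ> inv (\<sigma> ?v) = \<sigma> ?v \<circ> \<tau>2 (inv \<gamma> ?v) \<circ> inv (\<sigma> ?v)"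
      unfolding cj_def hh mm1 mm2 by simp
    then have "\<sigma> ?v \<circ> \<tau>1 w \<circ> inv (\<sigma> ?v) = \<sigma> ?v \<circ> \<tau>2 w \<circ> inv (\<sigma> ?v)"
      unfolding iv .
    then have e: "\<And>y. \<sigma> ?v (\<tau>1 w (inv (\<sigma> ?v) y)) = \<sigma> ?v (\<tau>2 w (inv (\<sigma> ?v) y))"
      by (metis comp_apply)
    show ?thesis
    proof
      fix x
      have "\<sigma> ?v (\<tau>1 w x) = \<sigma> ?v (\<tau>2 w x)"
        using e[of "\<sigma> ?v x"] permutes_inverses(2)[OF s[of ?v]] by simp
      then show "\<tau>1 w x = \<tau>2 w x" using permutes_inj[OF s[of ?v]] by (simp add: inj_eq)
    qed
  qed
  then show "m1 = m2" unfolding mm1 mm2 by auto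
qed

lemma decomp:
  assumes h: "h \<in> Hgrp n E v0" and conn: "\<And>v. E\<^sup>*\<^sup>* v0 v"
  shows "\<exists>r m u. m \<in> Mset n E v0 r \<and> u \<in> Usub n E v0 \<and> h = Hmult m u"
proof -
  obtain \<sigma> \<gamma> where hh: "h = (\<sigma>, \<gamma>)" by (cases h)
  have s: "\<And>v. \<sigma> v permutes {..<n}" "finite {v. \<sigma> v 0 \<noteq> 0}" "\<gamma> \<in> stab_K E v0"
    using h unfolding hh Hgrp_def by auto
  obtain r where r: "{v. \<sigma> v 0 \<noteq> 0} \<subseteq> tball E v0 r" using tball_finite_cover[OF s(2) conn] by blast
  define m where "m = ((\<lambda>v. if \<sigma> v 0 \<noteq> 0 then \<sigma> v else id), (id :: 'a \<Rightarrow> 'a))"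
  define u where "u = ((\<lambda>v. if \<sigma> v 0 \<noteq> 0 then id else \<sigma> v), \<gamma>)"
  have "m \<in> Mset n E v0 r" unfolding m_def Mset_def using s(1) r by (auto intro: permutes_id)
  moreover have "u \<in> Usub n E v0" unfolding u_def Usub_def using s by (auto intro: permutes_id)
  moreover have "h = Hmult m u" unfolding hh m_def u_def Hmult_simp by (auto simp: fun_eq_iff)
  ultimately show ?thesis by blast
qed

lemma Usub_inv:
  assumes u: "u \<in> Usub n E v0"
  shows "\<exists>u'\<in>Usub n E v0. Hmult u' u = Hone"
proof -
  obtain \<tau> \<delta> where uu: "u = (\<tau>, \<delta>)" by (cases u)
  have t: "\<And>v. \<tau> v permutes {..<n}" "\<And>v. \<tau> v 0 = 0" "\<delta> \<in> stab_K E v0"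
    using u unfolding uu Usub_def by auto
  have bd: "bij \<delta>" using t(3) unfolding stab_K_def tree_aut_def by blast
  define u' where "u' = ((\<lambda>v. inv (\<tau> (\<delta> v))), inv \<delta>)"
  have "inv (\<tau> (\<delta> v)) 0 = 0" for v using t(2)[of "\<delta> v"] permutes_inverses(2)[OF t(1)[of "\<delta> v"], of 0] by simp
  then have "u' \<in> Usub n E v0" unfolding u'_def Usub_def using t inv_stab_K[OF t(3)] by (auto intro: permutes_inv)
  moreover have "Hmult u' u = Hone"
  proof -
    have "inv (inv \<delta>) = \<delta>" using bd by (simp add: inv_inv_eq)
    moreover have "inv (\<tau> (\<delta> v)) \<circ> \<tau> (\<delta> v) = id" for v by (rule permutes_inv_o(2)[OF t(1)])
    moreover have "inv \<delta> \<circ> \<delta> = id" using bd by (simp add: bij_is_inj)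
    ultimately show ?thesis unfolding u'_def uu Hmult_simp Hone_def by simp
  qed
  ultimately show ?thesis by blast
qed



theorem proposition3:
  fixes E :: "'v \<Rightarrow> 'v \<Rightarrow> bool" and v0 :: 'v and n d :: nat
  assumes "n \<ge> 2" and "d \<ge> 3" and "regular_tree E d"
  shows "strongly_amenable TYPE('y) (Hgrp n E v0) Hmult Hone (Htop n E v0)"
proof -
  have R: "(\<forall>x y. E x y \<longrightarrow> E y x) \<and> (\<forall>x. \<not> E x x) \<and>
     (\<forall>x y. E\<^sup>*\<^sup>* x y) \<and> (\<nexists>xs. graph_cycle E xs) \<and>
     (\<forall>x. finite {y. E x y} \<and> card {y. E x y} = d)" using assms(3) unfolding regular_tree_def .
  have C: "\<forall>x y. E\<^sup>*\<^sup>* x y" by (rule conjunct1[OF conjunct2[OF conjunct2[OF R]]])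
  have D: "\<forall>x. finite {y. E x y} \<and> card {y. E x y} = d" by (rule conjunct2[OF conjunct2[OF conjunct2[OF conjunct2[OF R]]]])
  have conn: "\<And>v. E\<^sup>*\<^sup>* v0 v" using C by blast
  have fin: "\<And>x. finite {y. E x y}" using D by blast
  let ?G = "Hgrp n E v0"
  let ?TG = "Htop n E v0"
  have GT: "?G \<subseteq> topspace ?TG" by (simp add: topspace_Htop)
  show ?thesis
    unfolding strongly_amenable_def
  proof (intro allI impI)
    fix TY :: "'y topology" and a
    assume A: "compact_space TY \<and> Hausdorff_space TY \<and> topspace TY \<noteq> {} \<and>
        continuous_action ?G Hmult Hone ?TG TY a \<and> proximal_action ?G TY a"
    then have cpt: "compact_space TY" and H: "Hausdorff_space TY" and ne: "topspace TY \<noteq> {}"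
      and act: "continuous_action ?G Hmult Hone ?TG TY a" and prox: "proximal_action ?G TY a" by auto
    have law: "\<And>g h y. g \<in> ?G \<Longrightarrow> h \<in> ?G \<Longrightarrow> y \<in> topspace TY \<Longrightarrow> a (Hmult g h) y = a g (a h y)"
      using act unfolding continuous_action_def by blast
    have one: "\<And>y. y \<in> topspace TY \<Longrightarrow> a Hone y = y"
      using act unfolding continuous_action_def by blast
    have inT: "\<And>g y. g \<in> ?G \<Longrightarrow> y \<in> topspace TY \<Longrightarrow> a g y \<in> topspace TY"
      using act_in[OF act] GT by blast
    have MG: "\<And>r. Mset n E v0 r \<subseteq> ?G" by (rule Mset_Hgrp) (rule fin)
    have Mfin: "\<And>r. finite (Mset n E v0 r)" by (rule Mset_finite) (rule fin)
    have Ucpt: "compactin ?TG (Usub n E v0)" by (rule Usub_compact) (rule conn, rule fin)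
    define F where "F r = {y \<in> topspace TY. \<forall>m\<in>Mset n E v0 r. a m y = y}" for r
    have Fcl: "closedin TY (F r)" for r
      unfolding F_def by (rule fix_closed[OF act H]) (use MG GT in blast)
    have Fne: "F r \<noteq> {}" for r
    proof -
      have "\<exists>y\<in>topspace TY. \<forall>x\<in>Mset n E v0 r. a x y = y"
      proof (rule fix_finite_normal[OF act prox H ne Mfin MG GT])
        fix h assume h: "h \<in> ?G"
        show "\<exists>c. inj_on c (Mset n E v0 r) \<and> c ` Mset n E v0 r \<subseteq> Mset n E v0 r \<and>
                 (\<forall>x\<in>Mset n E v0 r. Hmult h x = Hmult (c x) h)"
          using cj_inj[OF h] cj_in[OF h] cj_eq[OF h] by blast
      qed
      then show ?thesis unfolding F_def by blast
    qed
    have Fdec: "decseq F"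
      unfolding decseq_def
    proof (intro allI impI)
      fix r r' :: nat assume "r \<le> r'"
      then have "Mset n E v0 r \<subseteq> Mset n E v0 r'" by (rule Mset_mono)
      then show "F r' \<le> F r" unfolding F_def by blast
    qed
    from compact_space_imp_nest[OF cpt Fcl Fne Fdec] obtain y where y: "y \<in> (\<Inter>r. F r)" by blast
    have Finv: "a h x \<in> (\<Inter>r. F r)" if h: "h \<in> ?G" and x: "x \<in> (\<Inter>r. F r)" for h x
    proof -
      have xF: "\<And>r. x \<in> F r" using x by blast
      have xT: "x \<in> topspace TY" using xF[of 0] unfolding F_def by blast
      have "a h x \<in> F r" for r
      proof -
        have surj: "cj h ` Mset n E v0 r = Mset n E v0 r"
        proof (rule endo_inj_surj[OF Mfin _ cj_inj[OF h]])
          show "cj h ` Mset n E v0 r \<subseteq> Mset n E v0 r" using cj_in[OF h] by blast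
        qed
        have "a m (a h x) = a h x" if m: "m \<in> Mset n E v0 r" for m
        proof -
          obtain m0 where m0: "m0 \<in> Mset n E v0 r" "m = cj h m0" using m surj by blast
          have mG: "m \<in> ?G" "m0 \<in> ?G" using m m0 MG by blast+
          have "a m (a h x) = a (Hmult m h) x" using law[OF mG(1) h xT] by simp
          also have "\<dots> = a (Hmult h m0) x" using cj_eq[OF h m0(1)] m0(2) by simp
          also have "\<dots> = a h (a m0 x)" using law[OF h mG(2) xT] .
          also have "\<dots> = a h x"
          proof -
            have "a m0 x = x" using xF[of r] m0(1) unfolding F_def by blast
            then show ?thesis by simp
          qed
          finally show ?thesis .
        qed
        then show ?thesis unfolding F_def using inT[OF h xT] by blast
      qed
      then show ?thesis by blast
    qed
    have yT: "y \<in> topspace TY" using y F_def by blast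
    show "\<exists>y\<in>topspace TY. \<forall>g\<in>?G. a g y = y"
    proof (intro bexI[OF _ yT] ballI)
      fix g assume g: "g \<in> ?G"
      define y' where "y' = a g y"
      have y': "y' \<in> (\<Inter>r. F r)" unfolding y'_def by (rule Finv[OF g y])
      have y'T: "y' \<in> topspace TY" using y' F_def by blast
      from prox yT y'T obtain z where z: "(z,z) \<in> (prod_topology TY TY) closure_of ((\<lambda>g. (a g y, a g y')) ` ?G)"
        unfolding proximal_action_def by blast
      let ?Img = "(\<lambda>u. (a u y, a u y')) ` Usub n E v0"
      have cont: "continuous_map ?TG (prod_topology TY TY) (\<lambda>h. (a h y, a h y'))"
        by (intro continuous_map_pairedI act_cont_g[OF act yT] act_cont_g[OF act y'T])
      have "compactin (prod_topology TY TY) ?Img"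
        by (rule image_compactin[OF Ucpt cont])
      moreover have "Hausdorff_space (prod_topology TY TY)"
        using H by (simp add: Hausdorff_space_prod_topology)
      ultimately have clI: "closedin (prod_topology TY TY) ?Img"
        using compactin_imp_closedin by blast
      have sub: "(\<lambda>g. (a g y, a g y')) ` ?G \<subseteq> ?Img"
      proof
        fix p assume "p \<in> (\<lambda>g. (a g y, a g y')) ` ?G"
        then obtain h where h: "h \<in> ?G" "p = (a h y, a h y')" by blast
        obtain r m u where mu: "m \<in> Mset n E v0 r" "u \<in> Usub n E v0" "h = Hmult m u"
          using decomp[OF h(1) conn] by blast
        have uG: "u \<in> ?G" using mu(2) Usub_Hgrp[of n E v0] by blast
        have mG: "m \<in> ?G" using mu(1) MG by blast
        have "a h x = a u x" if x: "x \<in> (\<Inter>r. F r)" for x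
        proof -
          have xT: "x \<in> topspace TY" using x F_def by blast
          have "a h x = a m (a u x)" using law[OF mG uG xT] mu(3) by simp
          also have "\<dots> = a u x"
          proof -
            have "a u x \<in> F r" using Finv[OF uG x] by blast
            then show ?thesis using mu(1) unfolding F_def by blast
          qed
          finally show ?thesis .
        qed
        then have "p = (a u y, a u y')" using h(2) y y' by simp
        then show "p \<in> ?Img" using mu(2) by blast
      qed
      have "(z,z) \<in> ?Img" using closure_of_minimal[OF sub clI] z by blast
      then obtain u where u: "u \<in> Usub n E v0" "a u y = z" "a u y' = z" by auto
      obtain u' where u': "u' \<in> Usub n E v0" "Hmult u' u = Hone" using Usub_inv[OF u(1)] by blast
      have uG: "u \<in> ?G" "u' \<in> ?G" using u(1) u'(1) Usub_Hgrp[of n E v0] by blast+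
      have "y = a (Hmult u' u) y" using u'(2) one[OF yT] by simp
      also have "\<dots> = a u' z" using law[OF uG(2) uG(1) yT] u(2) by simp
      also have "\<dots> = a (Hmult u' u) y'" using law[OF uG(2) uG(1) y'T] u(3) by simp
      also have "\<dots> = y'" using u'(2) one[OF y'T] by simp
      finally show "a g y = y" unfolding y'_def by simp
    qed
  qed
qed

end
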